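(* There exist absolute constants $c_1,c_2>0$ such that for every $M\in\{0,1\}^{m\times n}$, $$c_1\operatorname{disc}^{+}(M)\leq \operatorname{pdisc}(M)\leq c_2\operatorname{disc}^{+}(M)\quad\text{and}\quad c_1\operatorname{disc}^{-}(M)\leq \operatorname{pdisc}(M)\leq c_2\operatorname{disc}^{-}(M).$$
   Context: For $M\in\{0,1\}^{m\times n}$, $|M|$ is the number of $1$ entries, $p=|M|/(mn)$, and for $X\subset[m]$, $Y\subset[n]$, $\operatorname{disc}(X,Y)=|M[X\times Y]|-p|X||Y|$, where $|M[X\times Y]|$ is the number of $1$ entries of the submatrix with rows $X$ and columns $Y$; $\operatorname{disc}^{+}(M)=\max_{X,Y}\operatorname{disc}(X,Y)$ and $\operatorname{disc}^{-}(M)=\max_{X,Y}(-\operatorname{disc}(X,Y))$. Let $N=m+n$. The symmetrization of $M$ is the symmetric matrix $A\in\mathbb{R}^{N\times N}$ with $A_{i,j+m}=A_{j+m,i}=M_{i,j}$ for $(i,j)\in[m]\times[n]$ and all other entries $0$. Let $L\in\mathbb{R}^{N\times N}$ be the adjacency matrix of the complete bipartite graph with parts $[m]$ and $[m+1,N]$ ($L_{i,j}=1$ if exactly one of $i,j$ lies in $[m]$, else $0$). For $X\in\mathbb{R}^{N\times N}$, $\operatorname{disc}(X)=\langle X,A\rangle-p\langle X,L\rangle$, where $\langle\cdot,\cdot\rangle$ is the entrywise (Frobenius) inner product, and $\operatorname{pdisc}(M)=\max\{\operatorname{disc}(X): X \text{ symmetric positive semidefinite},\ X_{i,i}\leq 1\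 \forall i\in[N]\}$. *)

theory Defs
  imports Complex_Main
begin

text \<open>Matrices are functions nat => nat => real, indexed from 0; only the entries
inside the stated index range matter.\<close>

definition density :: "nat \<Rightarrow> nat \<Rightarrow> (nat \<Rightarrow> nat \<Rightarrow> real) \<Rightarrow> real" where
  "density m n M = (\<Sum>i<m. \<Sum>j<n. M i j) / (real m * real n)"

definition disc_rect :: "nat \<Rightarrow> nat \<Rightarrow> (nat \<Rightarrow> nat \<Rightarrow> real) \<Rightarrow> nat set \<Rightarrow> nat set \<Rightarrow> real" where
  "disc_rect m n M X Y =
     (\<Sum>i\<in>X. \<Sum>j\<in>Y. M i j) - density m n M * real (card X) * real (card Y)"

definition disc_plus :: "nat \<Rightarrow> nat \<Rightarrow> (nat \<Rightarrow> nat \<Rightarrow> real) \<Rightarrow> real" where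
  "disc_plus m n M = Max {disc_rect m n M X Y | X Y. X \<subseteq> {..<m} \<and> Y \<subseteq> {..<n}}"

definition disc_minus :: "nat \<Rightarrow> nat \<Rightarrow> (nat \<Rightarrow> nat \<Rightarrow> real) \<Rightarrow> real" where
  "disc_minus m n M = Max {- disc_rect m n M X Y | X Y. X \<subseteq> {..<m} \<and> Y \<subseteq> {..<n}}"

definition symmetrization :: "nat \<Rightarrow> nat \<Rightarrow> (nat \<Rightarrow> nat \<Rightarrow> real) \<Rightarrow> nat \<Rightarrow> nat \<Rightarrow> real" where
  "symmetrization m n M i j =
     (if i < m \<and> m \<le> j \<and> j < m + n then M i (j - m)
      else if j < m \<and> m \<le> i \<and> i < m + n then M j (i - m) else 0)"

text \<open>Adjacency matrix of the complete bipartite graph with parts [m] and [m+1,N].\<close>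
definition bip_L :: "nat \<Rightarrow> nat \<Rightarrow> nat \<Rightarrow> nat \<Rightarrow> real" where
  "bip_L m n i j = (if i < m + n \<and> j < m + n \<and> ((i < m) \<noteq> (j < m)) then 1 else 0)"

definition frob :: "nat \<Rightarrow> (nat \<Rightarrow> nat \<Rightarrow> real) \<Rightarrow> (nat \<Rightarrow> nat \<Rightarrow> real) \<Rightarrow> real" where
  "frob N X A = (\<Sum>i<N. \<Sum>j<N. X i j * A i j)"

definition sym_psd :: "nat \<Rightarrow> (nat \<Rightarrow> nat \<Rightarrow> real) \<Rightarrow> bool" where
  "sym_psd N X \<longleftrightarrow> (\<forall>i<N. \<forall>j<N. X i j = X j i) \<and>
     (\<forall>v :: nat \<Rightarrow> real. 0 \<le> (\<Sum>i<N. \<Sum>j<N. v i * X i j * v j))"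

definition disc_mat :: "nat \<Rightarrow> nat \<Rightarrow> (nat \<Rightarrow> nat \<Rightarrow> real) \<Rightarrow> (nat \<Rightarrow> nat \<Rightarrow> real) \<Rightarrow> real" where
  "disc_mat m n M X =
     frob (m + n) X (symmetrization m n M) - density m n M * frob (m + n) X (bip_L m n)"

text \<open>The maximum is attained (compact feasible set); we write it as Sup.\<close>
definition pdisc :: "nat \<Rightarrow> nat \<Rightarrow> (nat \<Rightarrow> nat \<Rightarrow> real) \<Rightarrow> real" where
  "pdisc m n M = Sup {disc_mat m n M X | X. sym_psd (m + n) X \<and> (\<forall>i<m + n. X i i \<le> 1)}"

end

theory Submission
  imports Defs
begin


fun Exr :: "nat \<Rightarrow> ((nat \<Rightarrow> real) \<Rightarrow> real) \<Rightarrow> real" where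
  "Exr 0 f = f (\<lambda>_. 0)"
| "Exr (Suc d) f = Exr d (\<lambda>r. (f (r(d:=1)) + f (r(d:=-1))) / 2)"

lemma Ex_add: "Exr d (\<lambda>r. f r + g r) = Exr d f + Exr d g"
proof (induction d arbitrary: f g)
  case 0 then show ?case by simp
next
  case (Suc d)
  have "Exr (Suc d) (\<lambda>r. f r + g r) = Exr d (\<lambda>r. (f (r(d:=1)) + f (r(d:=-1))) / 2 + (g (r(d:=1)) + g (r(d:=-1))) / 2)"
    by (simp add: add_divide_distrib algebra_simps)
  also have "\<dots> = Exr (Suc d) f + Exr (Suc d) g" using Suc by simp
  finally show ?case .
qed

lemma Ex_cmult: "Exr d (\<lambda>r. c * f r) = c * Exr d f"
proof (induction d arbitrary: f)
  case 0 then show ?case by simp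
next
  case (Suc d)
  have "Exr (Suc d) (\<lambda>r. c * f r) = Exr d (\<lambda>r. c * ((f (r(d:=1)) + f (r(d:=-1))) / 2))"
    by (simp add: algebra_simps add_divide_distrib)
  also have "\<dots> = c * Exr (Suc d) f" using Suc by (simp only: Exr.simps)
  finally show ?case .
qed

lemma Ex_const: "Exr d (\<lambda>r. c) = c"
  by (induction d arbitrary: c) auto

lemma Ex_mono: "(\<And>r. f r \<le> g r) \<Longrightarrow> Exr d f \<le> Exr d g"
proof (induction d arbitrary: f g)
  case 0 then show ?case by simp
next
  case (Suc d)
  show ?case apply simp apply (rule Suc.IH) using Suc.prems
    by (simp add: add_mono divide_right_mono)
qed

lemma Ex_nonneg: "(\<And>r. 0 \<le> f r) \<Longrightarrow> 0 \<le> Exr d f"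
  using Ex_mono[of "\<lambda>_. 0" f d] by (simp add: Ex_const)

lemma Ex_sum: "finite A \<Longrightarrow> Exr d (\<lambda>r. \<Sum>k\<in>A. f k r) = (\<Sum>k\<in>A. Exr d (f k))"
proof (induction A rule: finite_induct)
  case empty then show ?case by (simp add: Ex_const)
next
  case (insert x F) then show ?case by (simp add: Ex_add)
qed

definition SS :: "nat \<Rightarrow> (nat \<Rightarrow> real) \<Rightarrow> (nat \<Rightarrow> real) \<Rightarrow> real" where
  "SS d c r = (\<Sum>k<d. r k * c k)"

lemma SS_upd: "SS (Suc d) c (r(d:=s)) = SS d c r + s * c d"
proof -
  have "(\<Sum>k<d. (r(d:=s)) k * c k) = (\<Sum>k<d. r k * c k)"
    by (rule sum.cong) auto
  then show ?thesis unfolding SS_def by simp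
qed

lemma SS_two: "Exr d (\<lambda>r. SS d c r * SS d c' r) = (\<Sum>k<d. c k * c' k)"
proof (induction d)
  case 0 then show ?case by (simp add: SS_def)
next
  case (Suc d)
  have "Exr (Suc d) (\<lambda>r. SS (Suc d) c r * SS (Suc d) c' r)
      = Exr d (\<lambda>r. SS d c r * SS d c' r + c d * c' d)"
    by (simp add: SS_upd algebra_simps add_divide_distrib)
  also have "\<dots> = (\<Sum>k<Suc d. c k * c' k)" using Suc by (simp add: Ex_add Ex_const)
  finally show ?case .
qed


lemma SS_four: "Exr d (\<lambda>r. (SS d c r)^4) \<le> 3 * (\<Sum>k<d. (c k)^2)^2"
proof (induction d)
  case 0 then show ?case by (simp add: SS_def)
next
  case (Suc d)
  define Q where "Q = (\<Sum>k<d. (c k)^2)"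
  have Q: "Exr d (\<lambda>r. (SS d c r)^2) = Q" using SS_two[of d c c] by (simp add: Q_def power2_eq_square)
  have e: "\<And>x y::real. ((x + 1 * y)^4 + (x + - 1 * y)^4) / 2 = x^4 + (6 * y^2) * x^2 + y^4"
    by (simp add: power_def algebra_simps add_divide_distrib)
  have "Exr (Suc d) (\<lambda>r. (SS (Suc d) c r)^4)
      = Exr d (\<lambda>r. (SS d c r)^4 + (6 * (c d)^2) * (SS d c r)^2 + (c d)^4)"
    by (simp only: Exr.simps SS_upd e)
  also have "\<dots> = Exr d (\<lambda>r. (SS d c r)^4) + 6 * (c d)^2 * Q + (c d)^4"
    by (simp add: Ex_add Ex_const Ex_cmult Q)
  also have "\<dots> \<le> 3 * Q^2 + 6 * (c d)^2 * Q + (c d)^4" using Suc Q_def by simp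
  also have "\<dots> \<le> 3 * (Q + (c d)^2)^2"
  proof -
    have "3 * (Q + (c d)^2)^2 = 3*Q^2 + 6*(c d)^2*Q + 3*(c d)^4" by algebra
    moreover have "0 \<le> (c d)^4" by (simp add: zero_le_even_power)
    ultimately show ?thesis by linarith
  qed
  finally show ?case by (simp add: Q_def)
qed



definition qf :: "nat \<Rightarrow> (nat \<Rightarrow> nat \<Rightarrow> real) \<Rightarrow> (nat \<Rightarrow> real) \<Rightarrow> real" where
  "qf N X v = (\<Sum>i<N. \<Sum>j<N. v i * X i j * v j)"

lemma sym_psd_iff: "sym_psd N X \<longleftrightarrow> (\<forall>i<N. \<forall>j<N. X i j = X j i) \<and> (\<forall>v. 0 \<le> qf N X v)"
  unfolding sym_psd_def qf_def by simp

lemma qf_Suc: "qf (Suc N) X v = qf N X v + v N * (\<Sum>i<N. (X i N + X N i) * v i) + v N * X N N * v N"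
  unfolding qf_def by (simp add: sum.distrib sum_distrib_left algebra_simps)

lemma qf_cong: "(\<And>i. i < N \<Longrightarrow> u i = v i) \<Longrightarrow> qf N X u = qf N X v"
  unfolding qf_def by (intro sum.cong refl) auto

lemma qf_sub_rank1: "qf N (\<lambda>i j. X i j - c i * c j) u = qf N X u - (\<Sum>i<N. c i * u i)^2"
  unfolding qf_def power2_eq_square sum_product
  by (simp add: sum_subtractf algebra_simps)

lemma sum_one_r: "k < (N::nat) \<Longrightarrow> (\<Sum>l<N. g l * (if l = k then 1 else 0)) = (g k::real)"
proof -
  assume k: "k < N"
  have "(\<Sum>l<N. g l * (if l = k then 1 else 0)) = (\<Sum>l\<in>{k}. g l * (if l = k then 1 else 0))"
    apply (rule sum.mono_neutral_right) using k by auto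
  then show ?thesis by simp
qed

lemma sum_two_r: "i < (N::nat) \<Longrightarrow> j < N \<Longrightarrow> i \<noteq> j \<Longrightarrow>
  (\<Sum>l<N. g l * (if l = i then a else if l = j then b else 0)) = g i * a + (g j * b::real)"
proof -
  assume h: "i < N" "j < N" "i \<noteq> j"
  have "(\<Sum>l<N. g l * (if l = i then a else if l = j then b else 0)) =
    (\<Sum>l\<in>{i,j}. g l * (if l = i then a else if l = j then b else 0))"
    apply (rule sum.mono_neutral_right) using h by auto
  then show ?thesis using h by simp
qed

lemma qf2:
  assumes "i < N" "j < N" "i \<noteq> j"
  shows "qf N X (\<lambda>k. if k = i then a else if k = j then b else 0)
       = a^2 * X i i + a * b * (X i j + X j i) + b^2 * X j j"
proof -
  let ?v = "\<lambda>k. if k = i then a else if k = j then b else 0"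
  have "qf N X ?v = (\<Sum>k<N. ?v k * (\<Sum>l<N. X k l * ?v l))"
    unfolding qf_def by (simp add: sum_distrib_left mult.assoc)
  also have "\<dots> = (\<Sum>k<N. (X k i * a + X k j * b) * ?v k)"
    using sum_two_r[OF assms] by (simp add: mult.commute)
  also have "\<dots> = (X i i * a + X i j * b) * a + (X j i * a + X j j * b) * b"
    by (rule sum_two_r[OF assms, where g="\<lambda>k. X k i * a + X k j * b"])
  finally show ?thesis by (simp add: power2_eq_square algebra_simps)
qed

lemma psd_diag: "sym_psd N X \<Longrightarrow> k < N \<Longrightarrow> 0 \<le> X k k"
proof -
  assume a: "sym_psd N X" "k < N"
  have "qf N X (\<lambda>i. if i = k then 1 else 0) = (\<Sum>i<N. (if i = k then 1 else 0) * (\<Sum>j<N. X i j * (if j = k then 1 else 0)))"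
    unfolding qf_def by (simp add: sum_distrib_left mult.assoc)
  also have "\<dots> = (\<Sum>i<N. X i k * (if i = k then 1 else 0))" using sum_one_r[OF a(2)] by (simp add: mult.commute)
  also have "\<dots> = X k k" by (rule sum_one_r[OF a(2)])
  finally show ?thesis using a(1) unfolding sym_psd_iff by metis
qed

lemma psd_pair: "sym_psd N X \<Longrightarrow> i < N \<Longrightarrow> j < N \<Longrightarrow> i \<noteq> j \<Longrightarrow>
   0 \<le> a^2 * X i i + 2 * a * b * X i j + b^2 * X j j"
proof -
  assume h: "sym_psd N X" "i < N" "j < N" "i \<noteq> j"
  have "0 \<le> qf N X (\<lambda>k. if k = i then a else if k = j then b else 0)"
    using h(1) unfolding sym_psd_iff by blast
  also have "\<dots> = a^2 * X i i + 2 * a * b * X i j + b^2 * X j j"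
    using qf2[OF h(2-4)] h unfolding sym_psd_iff by simp
  finally show ?thesis .
qed

lemma psd_abs_le: "sym_psd N X \<Longrightarrow> i < N \<Longrightarrow> j < N \<Longrightarrow> (\<forall>k<N. X k k \<le> 1) \<Longrightarrow> \<bar>X i j\<bar> \<le> 1"
proof (cases "i = j")
  case True
  assume "sym_psd N X" "i < N" "j < N" "\<forall>k<N. X k k \<le> 1"
  then show ?thesis using True psd_diag by fastforce
next
  case False
  assume h: "sym_psd N X" "i < N" "j < N" "\<forall>k<N. X k k \<le> 1"
  have "0 \<le> 1^2 * X i i + 2 * 1 * 1 * X i j + 1^2 * X j j" by (rule psd_pair[OF h(1-3) False])
  moreover have "0 \<le> 1^2 * X i i + 2 * 1 * (-1) * X i j + (-1)^2 * X j j" by (rule psd_pair[OF h(1-3) False])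
  moreover have "X i i \<le> 1" "X j j \<le> 1" using h by auto
  ultimately show ?thesis by (simp add: abs_le_iff)
qed

lemma psd_zero_diag: assumes "sym_psd N X" "i < N" "j < N" "X j j = 0" shows "X i j = 0"
proof (cases "i = j")
  case True then show ?thesis using assms by simp
next
  case False
  define t where "t = - X i j / (X i i + 1)"
  have d: "0 \<le> X i i" using psd_diag assms by blast
  have "0 \<le> t^2 * X i i + 2 * t * 1 * X i j + 1^2 * X j j" by (rule psd_pair[OF assms(1-3) False])
  then have "0 \<le> t^2 * X i i + 2 * t * X i j" using assms(4) by simp
  hence "0 \<le> (t^2 * X i i + 2 * t * X i j) * (X i i + 1)^2" using d by simp
  also have "\<dots> = (-1) * ((X i j)^2 * (X i i + 2))"
  proof -
    have e: "t * (X i i + 1) = - X i j" unfolding t_def using d by simp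
    have "(t^2 * X i i + 2 * t * X i j) * (X i i + 1)^2 = X i i * (t * (X i i + 1))^2 + 2 * X i j * (X i i + 1) * (t * (X i i + 1))"
      by algebra
    also have "\<dots> = (-1) * ((X i j)^2 * (X i i + 2))" unfolding e by (simp add: power2_eq_square algebra_simps)
    finally show ?thesis .
  qed
  finally have "(X i j)^2 * (X i i + 2) \<le> 0" by simp
  moreover have "X i i + 2 > 0" using d by simp
  ultimately have "(X i j)^2 \<le> 0" by (simp add: mult_le_0_iff)
  then show ?thesis by simp
qed



lemma psd_factor: "sym_psd N X \<Longrightarrow> \<exists>w. \<forall>i<N. \<forall>j<N. X i j = (\<Sum>k<N. w k i * w k j)"
proof (induction N arbitrary: X)
  case 0 then show ?case by simp
next
  case (Suc N)
  have sym: "\<And>i j. i < Suc N \<Longrightarrow> j < Suc N \<Longrightarrow> X i j = X j i" using Suc.prems unfolding sym_psd_iff by blast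
  have pos: "\<And>v. 0 \<le> qf (Suc N) X v" using Suc.prems unfolding sym_psd_iff by blast
  define a where "a = X N N"
  have a0: "0 \<le> a" unfolding a_def using psd_diag[OF Suc.prems] by simp
  define c where "c i = (if a > 0 then X i N / sqrt a else 0)" for i
  define X' where "X' i j = X i j - c i * c j" for i j
  have psd': "sym_psd N X'"
    unfolding sym_psd_iff
  proof (intro conjI allI impI)
    fix i j assume "i < N" "j < N"
    then show "X' i j = X' j i" unfolding X'_def using sym by simp
  next
    fix v
    show "0 \<le> qf N X' v"
    proof (cases "a > 0")
      case True
      define s where "s = (\<Sum>i<N. X i N * v i)"
      define u where "u = v(N := - s / a)"
      have uv: "qf N X' v = qf N X' u" by (rule qf_cong) (simp add: u_def)
      have "qf N X' u = qf N X u - (\<Sum>i<N. c i * u i)^2"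
        unfolding X'_def[abs_def] by (rule qf_sub_rank1)
      also have "(\<Sum>i<N. c i * u i) = s / sqrt a"
        unfolding c_def s_def u_def using True by (simp add: sum_divide_distrib)
      also have "qf N X u = qf (Suc N) X u + s^2 / a"
      proof -
        have "(\<Sum>i<N. (X i N + X N i) * u i) = 2 * s"
          unfolding s_def u_def using sym by (simp add: sum_distrib_left algebra_simps)
        then show ?thesis unfolding qf_Suc using True
          by (simp add: u_def a_def[symmetric] field_simps power2_eq_square)
      qed
      finally have "qf N X' u = qf (Suc N) X u" using True a0 by (simp add: power_divide)
      then show ?thesis using uv pos by simp
    next
      case False
      then have "X' = X" unfolding X'_def[abs_def] c_def by simp
      have "qf N X v = qf N X (v(N:=0))" by (rule qf_cong) simp
      also have "\<dots> = qf (Suc N) X (v(N:=0))" unfolding qf_Suc by simp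
      finally show ?thesis using pos \<open>X' = X\<close> by simp
    qed
  qed
  obtain w where w: "\<And>i j. i < N \<Longrightarrow> j < N \<Longrightarrow> X' i j = (\<Sum>k<N. w k i * w k j)"
    using Suc.IH[OF psd'] by blast
  define w' where "w' k i = (if k = N then c i else if i = N then 0 else w k i)" for k i
  have key: "X i j = c i * c j" if "i < Suc N" "j < Suc N" "i = N \<or> j = N" for i j
  proof (cases "a > 0")
    case True
    have sa: "sqrt a * sqrt a = a" using a0 by simp
    show ?thesis using that
    proof (elim disjE)
      assume "i = N"
      have "c N * c j = (a / sqrt a) * (X j N / sqrt a)" unfolding c_def using True a_def by simp
      also have "\<dots> = X j N" using True sa by (simp add: field_simps)
      finally show ?thesis using \<open>i = N\<close> sym[of N j] that by simp
    next
      assume "j = N"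
      have "c i * c N = (X i N / sqrt a) * (a / sqrt a)" unfolding c_def using True a_def by simp
      also have "\<dots> = X i N" using True sa by (simp add: field_simps)
      finally show ?thesis using \<open>j = N\<close> by simp
    qed
  next
    case False
    then have "a = 0" using a0 by simp
    have z: "X k N = 0" if "k < Suc N" for k
      by (rule psd_zero_diag[OF Suc.prems that]) (use \<open>a = 0\<close> a_def in auto)
    show ?thesis using that False z sym[of N j] z[of j] unfolding c_def by auto
  qed
  show ?case
  proof (intro exI allI impI)
    fix i j assume ij: "i < Suc N" "j < Suc N"
    have "(\<Sum>k<Suc N. w' k i * w' k j) = (\<Sum>k<N. w' k i * w' k j) + c i * c j"
      by (simp add: w'_def)
    also have "(\<Sum>k<N. w' k i * w' k j) = (if i = N \<or> j = N then 0 else \<Sum>k<N. w k i * w k j)"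
      unfolding w'_def by (auto intro: sum.cong)
    finally have e: "(\<Sum>k<Suc N. w' k i * w' k j) = (if i = N \<or> j = N then 0 else \<Sum>k<N. w k i * w k j) + c i * c j" .
    show "X i j = (\<Sum>k<Suc N. w' k i * w' k j)"
    proof (cases "i = N \<or> j = N")
      case True then show ?thesis using e key[OF ij] by simp
    next
      case False
      then have "i < N" "j < N" using ij by auto
      then have "X i j - c i * c j = (\<Sum>k<N. w k i * w k j)" using w X'_def by metis
      then show ?thesis using e False by simp
    qed
  qed
qed



definition BB :: "nat \<Rightarrow> nat \<Rightarrow> (nat \<Rightarrow> nat \<Rightarrow> real) \<Rightarrow> nat \<Rightarrow> nat \<Rightarrow> real" where
  "BB m n M i j = M i j - density m n M"

definition rectB :: "nat \<Rightarrow> nat \<Rightarrow> (nat \<Rightarrow> nat \<Rightarrow> real) \<Rightarrow> nat set \<Rightarrow> nat set \<Rightarrow> real" where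
  "rectB m n M S Y = (\<Sum>i\<in>S. \<Sum>j\<in>Y. BB m n M i j)"

lemma disc_rect_B: "disc_rect m n M S Y = rectB m n M S Y"
  unfolding disc_rect_def rectB_def BB_def
  by (simp add: sum_subtractf sum.distrib sum_distrib_left algebra_simps)

lemma rect_total: "m \<ge> 1 \<Longrightarrow> n \<ge> 1 \<Longrightarrow> rectB m n M {..<m} {..<n} = 0"
  by (simp add: disc_rect_B[symmetric] disc_rect_def density_def)

definition Dset :: "nat \<Rightarrow> nat \<Rightarrow> (nat \<Rightarrow> nat \<Rightarrow> real) \<Rightarrow> real set" where
  "Dset m n M = {disc_rect m n M X Y | X Y. X \<subseteq> {..<m} \<and> Y \<subseteq> {..<n}}"

lemma Dset_img: "Dset m n M = (\<lambda>(X,Y). rectB m n M X Y) ` (Pow {..<m} \<times> Pow {..<n})"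
  unfolding Dset_def disc_rect_B by auto

lemma Dset_fin: "finite (Dset m n M)" unfolding Dset_img by simp

lemma Dset_ne: "Dset m n M \<noteq> {}" unfolding Dset_img by auto

lemma dplus_ge: "S \<subseteq> {..<m} \<Longrightarrow> Y \<subseteq> {..<n} \<Longrightarrow> rectB m n M S Y \<le> disc_plus m n M"
proof -
  assume "S \<subseteq> {..<m}" "Y \<subseteq> {..<n}"
  then have "rectB m n M S Y \<in> Dset m n M" unfolding Dset_img by auto
  moreover have "disc_plus m n M = Max (Dset m n M)" unfolding disc_plus_def Dset_def by simp
  ultimately show ?thesis using Dset_fin by simp
qed

lemma Dmin_eq: "{- disc_rect m n M X Y | X Y. X \<subseteq> {..<m} \<and> Y \<subseteq> {..<n}} = uminus ` Dset m n M"
  unfolding Dset_def by auto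

lemma dminus_ge: "S \<subseteq> {..<m} \<Longrightarrow> Y \<subseteq> {..<n} \<Longrightarrow> - rectB m n M S Y \<le> disc_minus m n M"
proof -
  assume "S \<subseteq> {..<m}" "Y \<subseteq> {..<n}"
  then have "- rectB m n M S Y \<in> uminus ` Dset m n M" unfolding Dset_img by auto
  moreover have "disc_minus m n M = Max (uminus ` Dset m n M)" unfolding disc_minus_def Dmin_eq by simp
  ultimately show ?thesis using Dset_fin by simp
qed

lemma dplus_ex: "\<exists>S Y. S \<subseteq> {..<m} \<and> Y \<subseteq> {..<n} \<and> disc_plus m n M = rectB m n M S Y"
proof -
  have "disc_plus m n M = Max (Dset m n M)" unfolding disc_plus_def Dset_def by simp
  then have "disc_plus m n M \<in> Dset m n M" using Max_in[OF Dset_fin Dset_ne] by simp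
  then show ?thesis unfolding Dset_img by auto
qed

lemma dminus_ex: "\<exists>S Y. S \<subseteq> {..<m} \<and> Y \<subseteq> {..<n} \<and> disc_minus m n M = - rectB m n M S Y"
proof -
  have "disc_minus m n M = Max (uminus ` Dset m n M)" unfolding disc_minus_def Dmin_eq by simp
  then have "disc_minus m n M \<in> uminus ` Dset m n M" using Max_in[of "uminus ` Dset m n M"] Dset_fin Dset_ne by simp
  then show ?thesis unfolding Dset_img by auto
qed

lemma dplus_nonneg: "0 \<le> disc_plus m n M"
  using dplus_ge[of "{}" m "{}" n M] by (simp add: rectB_def)

lemma dminus_nonneg: "0 \<le> disc_minus m n M"
  using dminus_ge[of "{}" m "{}" n M] by (simp add: rectB_def)

lemma rect_split:
  assumes "S \<subseteq> {..<m}" "Y \<subseteq> {..<n}"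
  shows "rectB m n M {..<m} {..<n} = rectB m n M S Y + rectB m n M ({..<m} - S) Y
     + rectB m n M S ({..<n} - Y) + rectB m n M ({..<m} - S) ({..<n} - Y)"
proof -
  have fS: "finite S" "finite Y" using assms finite_subset by auto
  have r: "\<And>T. rectB m n M T {..<n} = rectB m n M T Y + rectB m n M T ({..<n} - Y)"
  proof -
    fix T
    have e: "\<And>i. sum (BB m n M i) {..<n} = sum (BB m n M i) Y + sum (BB m n M i) ({..<n}-Y)"
      using sum.subset_diff[OF assms(2)] by (simp add: add.commute)
    show "rectB m n M T {..<n} = rectB m n M T Y + rectB m n M T ({..<n} - Y)"
      unfolding rectB_def e by (simp only: sum.distrib)
  qed
  have l: "\<And>Z. rectB m n M {..<m} Z = rectB m n M S Z + rectB m n M ({..<m} - S) Z"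
    unfolding rectB_def using sum.subset_diff[OF assms(1)] by (simp add: add.commute)
  show ?thesis using l[of "{..<n}"] r[of S] r[of "{..<m} - S"] by simp
qed

lemma minus_le_plus: "m \<ge> 1 \<Longrightarrow> n \<ge> 1 \<Longrightarrow> disc_minus m n M \<le> 3 * disc_plus m n M"
proof -
  assume mn: "m \<ge> 1" "n \<ge> 1"
  obtain S Y where SY: "S \<subseteq> {..<m}" "Y \<subseteq> {..<n}" "disc_minus m n M = - rectB m n M S Y"
    using dminus_ex[of m n M] by meson
  have "rectB m n M ({..<m} - S) Y \<le> disc_plus m n M" by (rule dplus_ge) (use SY in auto)
  moreover have "rectB m n M S ({..<n} - Y) \<le> disc_plus m n M" by (rule dplus_ge) (use SY in auto)
  moreover have "rectB m n M ({..<m} - S) ({..<n} - Y) \<le> disc_plus m n M" by (rule dplus_ge) auto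
  ultimately show ?thesis using rect_split[OF SY(1,2), of M] rect_total[OF mn, of M] SY(3) by linarith
qed

lemma plus_le_minus: "m \<ge> 1 \<Longrightarrow> n \<ge> 1 \<Longrightarrow> disc_plus m n M \<le> 3 * disc_minus m n M"
proof -
  assume mn: "m \<ge> 1" "n \<ge> 1"
  obtain S Y where SY: "S \<subseteq> {..<m}" "Y \<subseteq> {..<n}" "disc_plus m n M = rectB m n M S Y"
    using dplus_ex[of m n M] by meson
  have "- rectB m n M ({..<m} - S) Y \<le> disc_minus m n M" by (rule dminus_ge) (use SY in auto)
  moreover have "- rectB m n M S ({..<n} - Y) \<le> disc_minus m n M" by (rule dminus_ge) (use SY in auto)
  moreover have "- rectB m n M ({..<m} - S) ({..<n} - Y) \<le> disc_minus m n M" by (rule dminus_ge) auto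
  ultimately show ?thesis using rect_split[OF SY(1,2), of M] rect_total[OF mn, of M] SY(3) by linarith
qed

lemma abs_lin:
  fixes x c :: "'a \<Rightarrow> real"
  assumes "finite I" "\<And>i. i \<in> I \<Longrightarrow> \<bar>x i\<bar> \<le> 1"
  shows "(\<Sum>i\<in>I. x i * c i) \<le> (\<Sum>i\<in>{i\<in>I. 0 \<le> c i}. c i) - (\<Sum>i\<in>{i\<in>I. c i < 0}. c i)"
proof -
  have "(\<Sum>i\<in>I. x i * c i) \<le> (\<Sum>i\<in>I. \<bar>c i\<bar>)"
  proof (rule sum_mono)
    fix i assume "i \<in> I"
    then have "\<bar>x i\<bar> \<le> 1" by (rule assms(2))
    then have "\<bar>x i * c i\<bar> \<le> \<bar>c i\<bar>" by (simp add: abs_mult mult_left_le_one_le)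
    then show "x i * c i \<le> \<bar>c i\<bar>" by simp
  qed
  also have "\<dots> = (\<Sum>i\<in>I. (if 0 \<le> c i then c i else 0)) - (\<Sum>i\<in>I. (if c i < 0 then c i else 0))"
    unfolding sum_subtractf[symmetric] by (rule sum.cong) auto
  also have "\<dots> = (\<Sum>i\<in>{i\<in>I. 0 \<le> c i}. c i) - (\<Sum>i\<in>{i\<in>I. c i < 0}. c i)"
    using assms(1) by (simp add: sum.inter_filter)
  finally show ?thesis .
qed

lemma cut_bound:
  assumes "\<And>i. i < m \<Longrightarrow> \<bar>x i\<bar> \<le> 1" "\<And>j. j < n \<Longrightarrow> \<bar>y j\<bar> \<le> 1"
  shows "(\<Sum>i<m. \<Sum>j<n. BB m n M i j * x i * y j) \<le> 2 * disc_plus m n M + 2 * disc_minus m n M"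
proof -
  define c where "c i = (\<Sum>j<n. BB m n M i j * y j)" for i
  define P where "P = {i\<in>{..<m}. 0 \<le> c i}"
  define Q where "Q = {i\<in>{..<m}. c i < 0}"
  define d where "d j = (\<Sum>i\<in>P. BB m n M i j) - (\<Sum>i\<in>Q. BB m n M i j)" for j
  define P' where "P' = {j\<in>{..<n}. 0 \<le> d j}"
  define Q' where "Q' = {j\<in>{..<n}. d j < 0}"
  have "(\<Sum>i<m. \<Sum>j<n. BB m n M i j * x i * y j) = (\<Sum>i<m. x i * c i)"
    unfolding c_def by (simp add: sum_distrib_left algebra_simps)
  also have "\<dots> \<le> (\<Sum>i\<in>P. c i) - (\<Sum>i\<in>Q. c i)"
    unfolding P_def Q_def by (rule abs_lin) (use assms in auto)
  also have "\<dots> = (\<Sum>j<n. y j * d j)"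
    unfolding c_def d_def
    by (simp add: sum_distrib_left sum_subtractf sum.swap[of _ P] sum.swap[of _ Q] algebra_simps)
  also have "\<dots> \<le> (\<Sum>j\<in>P'. d j) - (\<Sum>j\<in>Q'. d j)"
    unfolding P'_def Q'_def by (rule abs_lin) (use assms in auto)
  also have "\<dots> = rectB m n M P P' - rectB m n M Q P' - (rectB m n M P Q' - rectB m n M Q Q')"
    unfolding d_def rectB_def by (simp add: sum_subtractf sum.swap[of _ P'] sum.swap[of _ Q'])
  also have "\<dots> \<le> 2 * disc_plus m n M + 2 * disc_minus m n M"
  proof -
    have s: "P \<subseteq> {..<m}" "Q \<subseteq> {..<m}" "P' \<subseteq> {..<n}" "Q' \<subseteq> {..<n}"
      unfolding P_def Q_def P'_def Q'_def by auto
    show ?thesis using dplus_ge[OF s(1,3), of M] dplus_ge[OF s(2,4), of M] dminus_ge[OF s(2,3), of M] dminus_ge[OF s(1,4), of M]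
      by linarith
  qed
  finally show ?thesis .
qed



definition Vf :: "nat \<Rightarrow> nat \<Rightarrow> (nat \<Rightarrow> nat \<Rightarrow> real) \<Rightarrow> (nat \<Rightarrow> nat \<Rightarrow> real) \<Rightarrow> real" where
  "Vf m n M X = (\<Sum>i<m. \<Sum>j<n. BB m n M i j * X i (m+j))"

definition FF :: "nat \<Rightarrow> (nat \<Rightarrow> nat \<Rightarrow> real) set" where
  "FF N = {X. sym_psd N X \<and> (\<forall>i<N. X i i \<le> 1)}"

definition Phi :: "nat \<Rightarrow> nat \<Rightarrow> (nat \<Rightarrow> nat \<Rightarrow> real) \<Rightarrow> real" where
  "Phi m n M = Sup (Vf m n M ` FF (m+n))"

lemma Vf_cong: "(\<And>i j. i < m \<Longrightarrow> j < n \<Longrightarrow> X i (m+j) = Y i (m+j)) \<Longrightarrow> Vf m n M X = Vf m n M Y"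
  unfolding Vf_def by (intro sum.cong refl) auto

lemma Vf_scale: "Vf m n M (\<lambda>k l. t * X k l) = t * Vf m n M X"
  unfolding Vf_def by (simp add: sum_distrib_left algebra_simps)

lemma Vf_add: "Vf m n M (\<lambda>k l. X k l + Y k l) = Vf m n M X + Vf m n M Y"
  unfolding Vf_def by (simp add: sum.distrib algebra_simps)

lemma Vf_Ex: "Vf m n M (\<lambda>k l. Exr d (\<lambda>r. G r k l)) = Exr d (\<lambda>r. Vf m n M (G r))"
  unfolding Vf_def by (simp add: Ex_sum Ex_cmult)

lemma zero_FF: "(\<lambda>_ _. 0) \<in> FF N"
  unfolding FF_def sym_psd_iff qf_def by simp

lemma Vf_bound: "X \<in> FF (m+n) \<Longrightarrow> Vf m n M X \<le> (\<Sum>i<m. \<Sum>j<n. \<bar>BB m n M i j\<bar>)"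
  unfolding Vf_def
proof (intro sum_mono)
  fix i j assume X: "X \<in> FF (m+n)" and ij: "i \<in> {..<m}" "j \<in> {..<n}"
  have "\<bar>X i (m+j)\<bar> \<le> 1" using X ij psd_abs_le[of "m+n" X i "m+j"] unfolding FF_def by auto
  then have "\<bar>BB m n M i j * X i (m+j)\<bar> \<le> \<bar>BB m n M i j\<bar>"
    by (simp add: abs_mult mult_left_le)
  then show "BB m n M i j * X i (m+j) \<le> \<bar>BB m n M i j\<bar>" by simp
qed

lemma Vf_bdd: "bdd_above (Vf m n M ` FF (m+n))"
  using Vf_bound by (auto intro!: bdd_aboveI2)

lemma Vf_le_Phi: "X \<in> FF (m+n) \<Longrightarrow> Vf m n M X \<le> Phi m n M"
  unfolding Phi_def by (rule cSup_upper) (use Vf_bdd in auto)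

lemma Phi_nonneg: "0 \<le> Phi m n M"
  using Vf_le_Phi[OF zero_FF] by (simp add: Vf_def)

lemma cov_bound:
  assumes t: "t > 0" and u: "\<And>k. k < m+n \<Longrightarrow> Exr d (\<lambda>r. (u r k)^2) \<le> t"
  shows "Vf m n M (\<lambda>k l. Exr d (\<lambda>r. u r k * u r l)) \<le> t * Phi m n M"
proof -
  define Y where "Y k l = Exr d (\<lambda>r. u r k * u r l) / t" for k l
  have "Y \<in> FF (m+n)"
    unfolding FF_def sym_psd_iff
  proof (intro CollectI conjI allI impI)
    fix i j show "Y i j = Y j i" unfolding Y_def by (simp add: mult.commute)
  next
    fix v
    have "Exr d (\<lambda>r. \<Sum>i<m+n. \<Sum>j<m+n. (v i * v j) * (u r i * u r j))
        = (\<Sum>i<m+n. \<Sum>j<m+n. (v i * v j) * Exr d (\<lambda>r. u r i * u r j))"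
      by (simp add: Ex_sum Ex_cmult)
    also have "\<dots> = t * qf (m+n) Y v"
      unfolding qf_def Y_def using t by (simp add: sum_distrib_left algebra_simps)
    finally have e: "t * qf (m+n) Y v = Exr d (\<lambda>r. (\<Sum>i<m+n. v i * u r i)^2)"
      unfolding power2_eq_square sum_product by (simp add: algebra_simps)
    have "0 \<le> Exr d (\<lambda>r. (\<Sum>i<m+n. v i * u r i)^2)" by (rule Ex_nonneg) simp
    then have "0 \<le> t * qf (m+n) Y v" using e by simp
    moreover have "qf (m+n) Y v = (t * qf (m+n) Y v) / t" using t by simp
    ultimately show "0 \<le> qf (m+n) Y v" using t by (metis divide_nonneg_pos)
  next
    fix i assume "i < m+n"
    then show "Y i i \<le> 1" unfolding Y_def using u[of i] t by (simp add: power2_eq_square)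
  qed
  then have "Vf m n M Y \<le> Phi m n M" by (rule Vf_le_Phi)
  moreover have "Vf m n M (\<lambda>k l. Exr d (\<lambda>r. u r k * u r l)) = t * Vf m n M Y"
  proof -
    have "Vf m n M (\<lambda>k l. Exr d (\<lambda>r. u r k * u r l)) = Vf m n M (\<lambda>k l. t * Y k l)"
      unfolding Y_def using t by simp
    then show ?thesis by (simp add: Vf_scale)
  qed
  ultimately show ?thesis using t by simp
qed

definition clip :: "real \<Rightarrow> real" where "clip z = max (-8) (min 8 z)"

lemma clip_abs: "\<bar>clip z\<bar> \<le> 8" unfolding clip_def by auto

lemma clip_sq: "(clip z)^2 \<le> z^2"
proof -
  have "\<bar>clip z\<bar> \<le> \<bar>z\<bar>" unfolding clip_def by auto
  then show ?thesis by (simp add: abs_le_square_iff)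
qed

lemma clip_tail: "(z - clip z)^2 \<le> z^4 / 64"
proof (cases "\<bar>z\<bar> \<le> 8")
  case True
  then have "clip z = z" unfolding clip_def by auto
  then show ?thesis by simp
next
  case False
  then have "\<bar>z - clip z\<bar> \<le> \<bar>z\<bar>" unfolding clip_def by auto
  then have a: "(z - clip z)^2 \<le> z^2" by (simp add: abs_le_square_iff)
  have "(8::real)^2 \<le> \<bar>z\<bar>^2" by (rule power_mono) (use False in auto)
  then have "64 \<le> z^2" by simp
  then have "z^2 * 64 \<le> z^2 * z^2" by (intro mult_left_mono) auto
  moreover have "z^4 = z^2 * z^2" by algebra
  ultimately have "z^2 * 64 \<le> z^4" by metis
  then have "z^2 \<le> z^4 / 64" by (intro iffD2[OF pos_le_divide_eq]) auto
  then show ?thesis using a by linarith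
qed



lemma Ex_sq_scale: "Exr d (\<lambda>r. (c * f r)^2) = c^2 * Exr d (\<lambda>r. (f r)^2)"
proof -
  have "(\<lambda>r. (c * f r)^2) = (\<lambda>r. c^2 * (f r)^2)" by (simp add: power_mult_distrib)
  then show ?thesis by (simp add: Ex_cmult)
qed

lemma main_bound:
  assumes X: "X \<in> FF (m+n)"
  shows "Vf m n M X \<le> 64 * (2 * disc_plus m n M + 2 * disc_minus m n M) + 3/4 * Phi m n M"
proof -
  define N where "N = m + n"
  define C where "C = 2 * disc_plus m n M + 2 * disc_minus m n M"
  have psd: "sym_psd N X" and dg: "\<And>i. i < N \<Longrightarrow> X i i \<le> 1" using X unfolding FF_def N_def by auto
  obtain w where w: "\<And>i j. i < N \<Longrightarrow> j < N \<Longrightarrow> X i j = (\<Sum>k<N. w k i * w k j)"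
    using psd_factor[OF psd] by blast
  define z where "z r i = SS N (\<lambda>k. w k i) r" for r i
  have zz: "X i j = Exr N (\<lambda>r. z r i * z r j)" if "i < N" "j < N" for i j
    using w[OF that] SS_two[of N "\<lambda>k. w k i" "\<lambda>k. w k j"] unfolding z_def by simp
  have z2: "Exr N (\<lambda>r. (z r i)^2) \<le> 1" if "i < N" for i
    using zz[OF that that] dg[OF that] by (simp add: power2_eq_square)
  have z4: "Exr N (\<lambda>r. (z r i)^4) \<le> 3" if "i < N" for i
  proof -
    have s: "(\<Sum>k<N. (w k i)^2) = X i i" using w[OF that that] by (simp add: power2_eq_square)
    have "0 \<le> X i i" using psd_diag[OF psd that] .
    then have "(X i i)^2 \<le> 1" using dg[OF that] by (simp add: power_le_one)
    then show ?thesis using SS_four[of N "\<lambda>k. w k i"] s unfolding z_def by simp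
  qed
  define a where "a r i = clip (z r i)" for r i
  define b where "b r i = z r i - clip (z r i)" for r i
  have b2: "Exr N (\<lambda>r. (b r i)^2) \<le> 3/64" if "i < N" for i
  proof -
    have "Exr N (\<lambda>r. (b r i)^2) \<le> Exr N (\<lambda>r. (1/64) * (z r i)^4)"
      by (rule Ex_mono) (use clip_tail in \<open>simp add: b_def\<close>)
    also have "\<dots> = (1/64) * Exr N (\<lambda>r. (z r i)^4)" by (rule Ex_cmult)
    also have "\<dots> \<le> 3/64" using z4[OF that] by simp
    finally show ?thesis .
  qed
  have a2: "Exr N (\<lambda>r. (a r i)^2) \<le> 1" if "i < N" for i
  proof -
    have "Exr N (\<lambda>r. (a r i)^2) \<le> Exr N (\<lambda>r. (z r i)^2)"
      by (rule Ex_mono) (simp add: a_def clip_sq)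
    then show ?thesis using z2[OF that] by simp
  qed
  have dec: "Vf m n M (\<lambda>k l. z r k * z r l) = Vf m n M (\<lambda>k l. a r k * a r l) + Vf m n M (\<lambda>k l. b r k * a r l)
      + Vf m n M (\<lambda>k l. a r k * b r l) + Vf m n M (\<lambda>k l. b r k * b r l)" for r
  proof -
    have "(\<lambda>k l. z r k * z r l) = (\<lambda>k l. ((a r k * a r l + b r k * a r l) + a r k * b r l) + b r k * b r l)"
      by (auto simp: a_def b_def algebra_simps)
    then show ?thesis by (simp only: Vf_add)
  qed
  have "Vf m n M X = Vf m n M (\<lambda>k l. Exr N (\<lambda>r. z r k * z r l))"
    by (rule Vf_cong) (simp add: zz N_def)
  also have "\<dots> = Exr N (\<lambda>r. Vf m n M (\<lambda>k l. z r k * z r l))" by (rule Vf_Ex)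
  also have "\<dots> = Exr N (\<lambda>r. Vf m n M (\<lambda>k l. a r k * a r l)) + Exr N (\<lambda>r. Vf m n M (\<lambda>k l. b r k * a r l))
      + Exr N (\<lambda>r. Vf m n M (\<lambda>k l. a r k * b r l)) + Exr N (\<lambda>r. Vf m n M (\<lambda>k l. b r k * b r l))"
    unfolding dec by (simp only: Ex_add)
  finally have V: "Vf m n M X = Exr N (\<lambda>r. Vf m n M (\<lambda>k l. a r k * a r l)) + Exr N (\<lambda>r. Vf m n M (\<lambda>k l. b r k * a r l))
      + Exr N (\<lambda>r. Vf m n M (\<lambda>k l. a r k * b r l)) + Exr N (\<lambda>r. Vf m n M (\<lambda>k l. b r k * b r l))" .
  have t1: "Exr N (\<lambda>r. Vf m n M (\<lambda>k l. a r k * a r l)) \<le> 64 * C"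
  proof -
    have "Exr N (\<lambda>r. Vf m n M (\<lambda>k l. a r k * a r l)) \<le> Exr N (\<lambda>r. 64 * C)"
    proof (rule Ex_mono)
      fix r
      have "Vf m n M (\<lambda>k l. a r k * a r l) = 64 * (\<Sum>i<m. \<Sum>j<n. BB m n M i j * (a r i / 8) * (a r (m+j) / 8))"
        unfolding Vf_def by (simp add: sum_distrib_left algebra_simps)
      also have "\<dots> \<le> 64 * C" unfolding C_def
        by (intro mult_left_mono cut_bound) (auto simp: a_def clip_abs)
      finally show "Vf m n M (\<lambda>k l. a r k * a r l) \<le> 64 * C" .
    qed
    then show ?thesis by (simp add: Ex_const)
  qed
  have t2: "Exr N (\<lambda>r. Vf m n M (\<lambda>k l. b r k * a r l)) \<le> 1/4 * Phi m n M"
  proof -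
    define u where "u r k = (if k < m then 2 * b r k else (1/2) * a r k)" for r k
    have "Exr N (\<lambda>r. Vf m n M (\<lambda>k l. b r k * a r l)) = Exr N (\<lambda>r. Vf m n M (\<lambda>k l. u r k * u r l))"
    proof -
      have "Vf m n M (\<lambda>k l. b r k * a r l) = Vf m n M (\<lambda>k l. u r k * u r l)" for r
        by (rule Vf_cong) (simp add: u_def)
      then show ?thesis by simp
    qed
    also have "\<dots> = Vf m n M (\<lambda>k l. Exr N (\<lambda>r. u r k * u r l))" by (rule Vf_Ex[symmetric])
    also have "\<dots> \<le> 1/4 * Phi m n M"
    proof (rule cov_bound)
      fix k assume k: "k < m + n"
      show "Exr N (\<lambda>r. (u r k)^2) \<le> 1/4"
      proof (cases "k < m")
        case True
        then have "Exr N (\<lambda>r. (u r k)^2) = 2^2 * Exr N (\<lambda>r. (b r k)^2)"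
          unfolding u_def by (simp add: power_mult_distrib Ex_cmult)
        then show ?thesis using b2[of k] k N_def by simp
      next
        case False
        then have "Exr N (\<lambda>r. (u r k)^2) = (1/2)^2 * Exr N (\<lambda>r. (a r k)^2)"
          unfolding u_def using Ex_sq_scale[of N "1/2" "\<lambda>r. a r k"] by simp
        then show ?thesis using a2[of k] k N_def by (simp add: power2_eq_square)
      qed
    qed simp
    finally show ?thesis .
  qed
  have t3: "Exr N (\<lambda>r. Vf m n M (\<lambda>k l. a r k * b r l)) \<le> 1/4 * Phi m n M"
  proof -
    define u where "u r k = (if k < m then (1/2) * a r k else 2 * b r k)" for r k
    have "Exr N (\<lambda>r. Vf m n M (\<lambda>k l. a r k * b r l)) = Exr N (\<lambda>r. Vf m n M (\<lambda>k l. u r k * u r l))"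
    proof -
      have "Vf m n M (\<lambda>k l. a r k * b r l) = Vf m n M (\<lambda>k l. u r k * u r l)" for r
        by (rule Vf_cong) (simp add: u_def)
      then show ?thesis by simp
    qed
    also have "\<dots> = Vf m n M (\<lambda>k l. Exr N (\<lambda>r. u r k * u r l))" by (rule Vf_Ex[symmetric])
    also have "\<dots> \<le> 1/4 * Phi m n M"
    proof (rule cov_bound)
      fix k assume k: "k < m + n"
      show "Exr N (\<lambda>r. (u r k)^2) \<le> 1/4"
      proof (cases "k < m")
        case False
        then have "Exr N (\<lambda>r. (u r k)^2) = 2^2 * Exr N (\<lambda>r. (b r k)^2)"
          unfolding u_def by (simp add: power_mult_distrib Ex_cmult)
        then show ?thesis using b2[of k] k N_def by simp
      next
        case True
        then have "Exr N (\<lambda>r. (u r k)^2) = (1/2)^2 * Exr N (\<lambda>r. (a r k)^2)"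
          unfolding u_def using Ex_sq_scale[of N "1/2" "\<lambda>r. a r k"] by simp
        then show ?thesis using a2[of k] k N_def by (simp add: power2_eq_square)
      qed
    qed simp
    finally show ?thesis .
  qed
  have t4: "Exr N (\<lambda>r. Vf m n M (\<lambda>k l. b r k * b r l)) \<le> 1/4 * Phi m n M"
  proof -
    have "Exr N (\<lambda>r. Vf m n M (\<lambda>k l. b r k * b r l)) = Vf m n M (\<lambda>k l. Exr N (\<lambda>r. b r k * b r l))"
      by (rule Vf_Ex[symmetric])
    also have "\<dots> \<le> 1/4 * Phi m n M"
    proof (rule cov_bound)
      fix k assume k: "k < m + n"
      show "Exr N (\<lambda>r. (b r k)^2) \<le> 1/4" using b2[of k] k N_def by simp
    qed simp
    finally show ?thesis .
  qed
  show ?thesis using V t1 t2 t3 t4 unfolding C_def by linarith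
qed

lemma Phi_bound: "Phi m n M \<le> 256 * (2 * disc_plus m n M + 2 * disc_minus m n M)"
proof -
  have "Phi m n M \<le> 64 * (2 * disc_plus m n M + 2 * disc_minus m n M) + 3/4 * Phi m n M"
    unfolding Phi_def[of m n M]
    apply (rule cSup_least)
    using zero_FF apply blast
    using main_bound unfolding Phi_def by blast
  then show ?thesis by linarith
qed



lemma sum_split_add: "(\<Sum>i<m+n. f i) = (\<Sum>i<m. f i) + (\<Sum>j<(n::nat). (f (m+j) :: real))"
  by (induction n) auto

lemma frob_split: "frob (m+n) X A = (\<Sum>i<m. \<Sum>j<m. X i j * A i j) + (\<Sum>i<m. \<Sum>j<n. X i (m+j) * A i (m+j))
   + (\<Sum>i<n. \<Sum>j<m. X (m+i) j * A (m+i) j) + (\<Sum>i<n. \<Sum>j<n. X (m+i) (m+j) * A (m+i) (m+j))"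
  unfolding frob_def sum_split_add by (simp add: sum.distrib)

lemma disc_mat_eq: "disc_mat m n M X = (\<Sum>i<m. \<Sum>j<n. BB m n M i j * (X i (m+j) + X (m+j) i))"
proof -
  have A: "frob (m+n) X (symmetrization m n M) = (\<Sum>i<m. \<Sum>j<n. X i (m+j) * M i j) + (\<Sum>i<n. \<Sum>j<m. X (m+i) j * M j i)"
    unfolding frob_split by (simp add: symmetrization_def)
  have L: "frob (m+n) X (bip_L m n) = (\<Sum>i<m. \<Sum>j<n. X i (m+j)) + (\<Sum>i<n. \<Sum>j<m. X (m+i) j)"
    unfolding frob_split by (simp add: bip_L_def)
  have s1: "(\<Sum>i<n. \<Sum>j<m. X (m+i) j * M j i) = (\<Sum>i<m. \<Sum>j<n. X (m+j) i * M i j)"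
    by (rule sum.swap)
  have s2: "(\<Sum>i<n. \<Sum>j<m. X (m+i) j) = (\<Sum>i<m. \<Sum>j<n. X (m+j) i)"
    by (rule sum.swap)
  show ?thesis unfolding disc_mat_def A L s1 s2 BB_def
    by (simp add: sum.distrib sum_subtractf sum_distrib_left algebra_simps)
qed

lemma disc_mat_FF: "X \<in> FF (m+n) \<Longrightarrow> disc_mat m n M X = 2 * Vf m n M X"
proof -
  assume X: "X \<in> FF (m+n)"
  have "disc_mat m n M X = (\<Sum>i<m. \<Sum>j<n. BB m n M i j * (2 * X i (m+j)))"
    unfolding disc_mat_eq
  proof (intro sum.cong refl)
    fix i j assume "i \<in> {..<m}" "j \<in> {..<n}"
    then have "X (m+j) i = X i (m+j)" using X unfolding FF_def sym_psd_iff by auto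
    then show "BB m n M i j * (X i (m+j) + X (m+j) i) = BB m n M i j * (2 * X i (m+j))" by simp
  qed
  also have "\<dots> = 2 * Vf m n M X" unfolding Vf_def by (simp add: sum_distrib_left algebra_simps)
  finally show ?thesis .
qed

lemma pdisc_img: "pdisc m n M = Sup (disc_mat m n M ` FF (m+n))"
proof -
  have "{disc_mat m n M X | X. sym_psd (m + n) X \<and> (\<forall>i<m + n. X i i \<le> 1)} = disc_mat m n M ` FF (m+n)"
    unfolding FF_def by auto
  then show ?thesis unfolding pdisc_def by simp
qed

lemma pdisc_bdd: "bdd_above (disc_mat m n M ` FF (m+n))"
  by (rule bdd_aboveI2[where M="2 * Phi m n M"]) (simp add: disc_mat_FF Vf_le_Phi)

lemma pdisc_upper: "pdisc m n M \<le> 2 * Phi m n M"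
  unfolding pdisc_img
  by (rule cSup_least) (use zero_FF in \<open>auto simp: disc_mat_FF Vf_le_Phi\<close>)

lemma pdisc_lower:
  assumes S: "S \<subseteq> {..<m}" and Y: "Y \<subseteq> {..<n}" and sg: "\<sigma> = 1 \<or> \<sigma> = (-1::real)"
  shows "2 * (\<sigma> * rectB m n M S Y) \<le> pdisc m n M"
proof -
  define v where "v k = (if k < m then (if k \<in> S then 1 else 0) else (if k - m \<in> Y then \<sigma> else 0))" for k
  define X where "X k l = v k * v l" for k l
  have vsq: "(v k)^2 \<le> 1" for k using sg unfolding v_def by auto
  have XF: "X \<in> FF (m+n)"
    unfolding FF_def sym_psd_iff
  proof (intro CollectI conjI allI impI)
    fix i j show "X i j = X j i" unfolding X_def by simp
  next
    fix x
    have "qf (m+n) X x = (\<Sum>i<m+n. x i * v i)^2"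
      unfolding qf_def X_def power2_eq_square sum_product by (simp add: algebra_simps)
    then show "0 \<le> qf (m+n) X x" by simp
  next
    fix i show "X i i \<le> 1" unfolding X_def using vsq[of i] by (simp add: power2_eq_square)
  qed
  have "Vf m n M X = (\<Sum>i<m. \<Sum>j<n. if i \<in> S then (if j \<in> Y then \<sigma> * BB m n M i j else 0) else 0)"
    unfolding Vf_def X_def v_def by (intro sum.cong refl) auto
  also have "\<dots> = (\<Sum>i<m. if i \<in> S then (\<Sum>j<n. if j \<in> Y then \<sigma> * BB m n M i j else 0) else 0)"
    by (intro sum.cong refl) auto
  also have "\<dots> = (\<Sum>i\<in>S. \<Sum>j\<in>Y. \<sigma> * BB m n M i j)"
  proof -
    have "\<And>i. (\<Sum>j<n. if j \<in> Y then \<sigma> * BB m n M i j else 0) = (\<Sum>j\<in>Y. \<sigma> * BB m n M i j)"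
      using sum.inter_restrict[of "{..<n}" "\<lambda>j. \<sigma> * BB m n M i j" Y for i] Y
      by (simp add: Int_absorb1)
    moreover have "(\<Sum>i<m. if i \<in> S then g i else 0) = (\<Sum>i\<in>S. g i)" for g :: "nat \<Rightarrow> real"
      using sum.inter_restrict[of "{..<m}" g S] S by (simp add: Int_absorb1)
    ultimately show ?thesis by simp
  qed
  also have "\<dots> = \<sigma> * rectB m n M S Y" unfolding rectB_def by (simp add: sum_distrib_left)
  finally have V: "Vf m n M X = \<sigma> * rectB m n M S Y" .
  have "disc_mat m n M X \<le> pdisc m n M"
    unfolding pdisc_img by (rule cSup_upper) (use XF pdisc_bdd in auto)
  then show ?thesis using disc_mat_FF[OF XF] V by simp
qed

lemma main_thm:
  fixes m n :: nat and M :: "nat \<Rightarrow> nat \<Rightarrow> real"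
  assumes mn: "m \<ge> 1" "n \<ge> 1"
  shows "1 * disc_plus m n M \<le> pdisc m n M \<and> pdisc m n M \<le> 4096 * disc_plus m n M \<and>
       1 * disc_minus m n M \<le> pdisc m n M \<and> pdisc m n M \<le> 4096 * disc_minus m n M"
proof -
  have up: "pdisc m n M \<le> 512 * (2 * disc_plus m n M + 2 * disc_minus m n M)"
    using pdisc_upper[of m n M] Phi_bound[of m n M] by linarith
  have r1: "disc_minus m n M \<le> 3 * disc_plus m n M" by (rule minus_le_plus[OF mn])
  have r2: "disc_plus m n M \<le> 3 * disc_minus m n M" by (rule plus_le_minus[OF mn])
  have n1: "0 \<le> disc_plus m n M" by (rule dplus_nonneg)
  have n2: "0 \<le> disc_minus m n M" by (rule dminus_nonneg)
  obtain S Y where SY: "S \<subseteq> {..<m}" "Y \<subseteq> {..<n}" "disc_plus m n M = rectB m n M S Y"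
    using dplus_ex[of m n M] by meson
  have l1: "2 * disc_plus m n M \<le> pdisc m n M" using pdisc_lower[OF SY(1,2), of 1 M] SY(3) by simp
  obtain S' Y' where SY': "S' \<subseteq> {..<m}" "Y' \<subseteq> {..<n}" "disc_minus m n M = - rectB m n M S' Y'"
    using dminus_ex[of m n M] by meson
  have l2: "2 * disc_minus m n M \<le> pdisc m n M" using pdisc_lower[OF SY'(1,2), of "-1" M] SY'(3) by simp
  have g1: "1 * disc_plus m n M \<le> pdisc m n M" using l1 n1 by linarith
  have "512 * (2 * disc_plus m n M + 2 * disc_minus m n M) \<le> 4096 * disc_plus m n M" using r1 by simp
  then have g2: "pdisc m n M \<le> 4096 * disc_plus m n M" using up by linarith
  have g3: "1 * disc_minus m n M \<le> pdisc m n M" using l2 n2 by linarith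
  have "512 * (2 * disc_plus m n M + 2 * disc_minus m n M) \<le> 4096 * disc_minus m n M" using r2 by simp
  then have g4: "pdisc m n M \<le> 4096 * disc_minus m n M" using up by linarith
  show ?thesis using g1 g2 g3 g4 by blast
qed

theorem claim2p6:
  shows "\<exists>c1 c2 :: real. c1 > 0 \<and> c2 > 0 \<and>
    (\<forall>(m::nat) (n::nat) (M :: nat \<Rightarrow> nat \<Rightarrow> real).
       m \<ge> 1 \<longrightarrow> n \<ge> 1 \<longrightarrow> (\<forall>i<m. \<forall>j<n. M i j \<in> {0, 1}) \<longrightarrow>
       c1 * disc_plus m n M \<le> pdisc m n M \<and> pdisc m n M \<le> c2 * disc_plus m n M \<and>
       c1 * disc_minus m n M \<le> pdisc m n M \<and> pdisc m n M \<le> c2 * disc_minus m n M)"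
  using main_thm by (intro exI[of _ 1] exI[of _ 4096]) auto

end
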